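(* Define $h_n\in\,]0,\pi/4]$ by $\tan h_n=m_n$, and let $G(x)=\tfrac12\arctan(2\tan x)$ for $|x|<\pi/2$. Then $h_n=G^{\circ n}(\pi/4)$ for all $n\ge0$.
   Context: $(m_n)_{n\ge0}$ is the unique sequence of positive reals with $m_0=1$ and $(1+m_1+\cdots+m_n)m_n=1$ for $n\ge1$ (equivalently $m_{n+1}^2+m_{n+1}/m_n-1=0$). $G^{\circ n}$ denotes the $n$-fold composition, $G^{\circ0}=\mathrm{id}$. *)

theory Defs
  imports Complex_Main
begin

definition G :: "real \<Rightarrow> real" where
  "G x = arctan (2 * tan x) / 2"

end

theory Submission
  imports Defs
begin

theorem proposition4p1:
  fixes m h :: "nat \<Rightarrow> real"
  assumes m0: "m 0 = 1"
    and mpos: "\<And>n. m n > 0"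
    and mrec: "\<And>n. n \<ge> 1 \<Longrightarrow> (1 + (\<Sum>k=1..n. m k)) * m n = 1"
    and hrange: "\<And>n. h n \<in> {0<..pi/4}"
    and htan: "\<And>n. tan (h n) = m n"
  shows "\<forall>n. h n = (G ^^ n) (pi/4)"
proof -
  have S: "(\<Sum>k\<le>n. m k) * m n = 1" for n
  proof (cases "n = 0")
    case True thus ?thesis using m0 by simp
  next
    case False
    have "(\<Sum>k\<le>n. m k) = m 0 + (\<Sum>k=1..n. m k)"
      by (simp add: atMost_atLeast0 sum.atLeast_Suc_atMost)
    thus ?thesis using mrec[of n] False m0 by simp
  qed
  have rec: "m (Suc n) ^ 2 + m (Suc n) / m n = 1" for n
  proof -
    have a: "(\<Sum>k\<le>n. m k) = 1 / m n" using S[of n] mpos[of n]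
      by (simp add: field_simps)
    have "((\<Sum>k\<le>n. m k) + m (Suc n)) * m (Suc n) = 1" using S[of "Suc n"] by simp
    thus ?thesis unfolding a using mpos[of n]
      by (simp add: field_simps power2_eq_square)
  qed
  have step: "h (Suc n) = G (h n)" for n
  proof -
    let ?x = "h (Suc n)"
    let ?t = "m (Suc n)"
    have tpos: "?t > 0" "m n > 0" using mpos by auto
    have q: "1 - ?t^2 = ?t / m n" using rec[of n] by simp
    have tl1: "?t < 1"
    proof -
      have "?t / m n > 0" using tpos by simp
      hence "?t^2 < 1" using q by simp
      thus ?thesis using tpos by (smt (verit) power2_eq_square mult_le_cancel_left1)
    qed
    have x1: "0 < ?x" "?x \<le> pi/4" using hrange[of "Suc n"] by auto
    have x2: "?x \<noteq> pi/4"
    proof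
      assume "?x = pi/4"
      hence "?t = tan (pi/4)" using htan[of "Suc n"] by metis
      hence "?t = 1" using tan_45 by simp
      thus False using tl1 by simp
    qed
    have x3: "?x < pi/4" using x1 x2 by simp
    have c1: "cos ?x \<noteq> 0" using x1 x3 cos_gt_zero_pi[of ?x] by (simp add: pi_gt_zero)
    have c2: "cos (2 * ?x) \<noteq> 0" using x1 x3 cos_gt_zero_pi[of "2 * ?x"] by simp
    have "tan (2 * ?x) = 2 * ?t / (1 - ?t^2)" using tan_double[OF c1 c2] htan by simp
    also have "\<dots> = 2 * m n" unfolding q using tpos by (simp add: field_simps)
    finally have "tan (2 * ?x) = 2 * tan (h n)" using htan by simp
    moreover have "arctan (tan (2 * ?x)) = 2 * ?x" using x1 x3 pi_gt_zero
      by (intro arctan_tan) auto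
    ultimately have "arctan (2 * tan (h n)) = 2 * ?x" by simp
    thus ?thesis unfolding G_def by simp
  qed
  have h0: "h 0 = pi/4"
  proof -
    have "arctan (tan (h 0)) = h 0" using hrange[of 0] by (intro arctan_tan) auto
    thus ?thesis using htan[of 0] m0 arctan_one by simp
  qed
  show ?thesis
  proof
    fix n show "h n = (G ^^ n) (pi/4)"
      by (induction n) (simp_all add: h0 step)
  qed
qed

end
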